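(* There exist constants $r,C>1$ such that for every $q\ge 2$ there exist $n\in\mathbb{N}$, $p\in(0,1)$ and a function $f\colon(\{0,1\}^n,\mu_p)\to\mathbb{R}$ such that (a) $\|f_{S\to x}\|_2\le r^{|S|}\|f\|_2$ for all $S\subseteq[n]$ and all $x\in\{0,1\}^S$, and (b) $\|T_\rho f\|_q>\|f\|_2$ for all $\rho>\frac{C\log q}{rq}$ (with $\rho\le 1$).
   Context: $\mu_p$ is the $p$-biased product measure on $\{0,1\}^n$, $\mu_p(x)=p^{|\{i:x_i=1\}|}(1-p)^{|\{i:x_i=0\}|}$; all norms are with respect to $\mu_p$. $f_{S\to x}(y)=f(x,y)$ is the restriction. The noise operator $T_\rho f(x)=\mathbb{E}_y[f(y)]$, where $y$ keeps each coordinate of $x$ independently with probability $\rho$ and otherwise resamples it from the $p$-biased distribution on $\{0,1\}$. $\log$ is the natural logarithm. *)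

theory Defs
  imports Complex_Main
begin

text \<open>Points of \<open>{0,1}^I\<close> (I a finite coordinate set) are represented by the
  subsets \<open>x \<subseteq> I\<close> of coordinates equal to 1.\<close>

definition pmu :: "real \<Rightarrow> nat set \<Rightarrow> nat set \<Rightarrow> real" where
  "pmu p I x = p ^ card x * (1 - p) ^ (card I - card x)"

definition pnorm :: "real \<Rightarrow> nat set \<Rightarrow> real \<Rightarrow> (nat set \<Rightarrow> real) \<Rightarrow> real" where
  "pnorm p I q g = (\<Sum>x\<in>Pow I. pmu p I x * \<bar>g x\<bar> powr q) powr (1 / q)"

text \<open>Restriction \<open>f_{S\<rightarrow>x}(y) = f(x,y)\<close>, a function on \<open>{0,1}^(I - S)\<close>.\<close>
definition restr :: "(nat set \<Rightarrow> real) \<Rightarrow> nat set \<Rightarrow> nat set \<Rightarrow> real" where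
  "restr f x y = f (x \<union> y)"

text \<open>Noise operator: each coordinate is kept with prob. \<open>\<rho>\<close>, otherwise
  resampled from the p-biased distribution.\<close>
definition noise_kernel :: "real \<Rightarrow> real \<Rightarrow> bool \<Rightarrow> bool \<Rightarrow> real" where
  "noise_kernel p \<rho> a b = \<rho> * (if a = b then 1 else 0) + (1 - \<rho>) * (if b then p else 1 - p)"

definition noise_op :: "real \<Rightarrow> nat set \<Rightarrow> real \<Rightarrow> (nat set \<Rightarrow> real) \<Rightarrow> nat set \<Rightarrow> real" where
  "noise_op p I \<rho> f x =
     (\<Sum>y\<in>Pow I. (\<Prod>i\<in>I. noise_kernel p \<rho> (i \<in> x) (i \<in> y)) * f y)"

end

theory Submission imports Defs begin

lemma ln_lower: fixes x::real assumes "0 \<le> x" "x \<le> 1" shows "x/2 \<le> ln (1+x)"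
proof -
  have "ln (1/(1+x)) \<le> 1/(1+x) - 1" using assms by (intro ln_le_minus_one) auto
  moreover have "ln (1/(1+x)) = - ln (1+x)" using assms by (simp add: ln_div)
  moreover have "1/(1+x) - 1 = - x/(1+x)" using assms by (simp add: field_simps)
  moreover have "x/2 \<le> x/(1+x)" using assms by (intro divide_left_mono) auto
  ultimately show ?thesis by linarith
qed

lemma exp_quarter: "exp (1/4::real) \<le> 3/2"
proof -
  have "1 + (-1/4) \<le> exp (-1/4::real)" by (rule exp_ge_add_one_self)
  hence "3/4 \<le> inverse (exp (1/4::real))" by (simp add: exp_minus)
  hence "exp (1/4::real) * (3/4) \<le> 1" by (simp add: field_simps)
  thus ?thesis by simp
qed

lemma key:
  fixes q \<rho> :: real
  assumes q: "q \<ge> 2" and r1: "6 * ln q / q < \<rho>" and r2: "\<rho> \<le> 1"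
  defines "p \<equiv> 1/(6*q)"
  shows "(1+3*p) powr (q/2) < (1-p) + p*(1+\<rho>) powr q"
proof -
  have lnq: "ln q \<ge> 0" using q by simp
  have rpos: "\<rho> > 0" using r1 q lnq by (smt (verit) divide_nonneg_pos)
  have "3 * ln q < q * \<rho> / 2" using r1 q by (simp add: field_simps)
  also have "q*\<rho>/2 \<le> q * ln (1+\<rho>)" proof -
    have "\<rho>/2 \<le> ln (1+\<rho>)" using ln_lower[of \<rho>] rpos r2 by simp
    hence "q*(\<rho>/2) \<le> q * ln (1+\<rho>)" using q by (intro mult_left_mono) auto
    thus ?thesis by simp
  qed
  finally have "exp (3 * ln q) < exp (q * ln (1+\<rho>))" by simp
  moreover have "exp (3 * ln q) = q^3" proof -
    have "exp (real 3 * ln q) = exp (ln q) ^ 3" by (rule exp_of_nat_mult)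
    thus ?thesis using q by simp
  qed
  moreover have "exp (q * ln (1+\<rho>)) = (1+\<rho>) powr q" using rpos by (simp add: powr_def)
  ultimately have A: "q^3 < (1+\<rho>) powr q" by simp
  have "q^3 \<ge> 1 + 3*q"
  proof -
    have "q*q \<ge> 2*2" using q by (intro mult_mono) auto
    hence "q^2 \<ge> 4" by (simp add: power2_eq_square)
    hence "q * q^2 \<ge> q*4" using q by simp
    moreover have "q^3 = q*q^2" by (simp add: power3_eq_cube power2_eq_square)
    ultimately show ?thesis using q by linarith
  qed
  with A have B: "1 + 3*q < (1+\<rho>) powr q" by simp
  have pp: "p > 0" using q by (simp add: p_def)
  have "(1-p) + p*(1+3*q) < (1-p) + p*(1+\<rho>) powr q" using B pp by simp
  moreover have "(1-p) + p*(1+3*q) = 3/2" using q by (simp add: p_def field_simps)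
  moreover have "(1+3*p) powr (q/2) \<le> exp (1/4)"
  proof -
    have "(1+3*p) powr (q/2) = exp (q/2 * ln (1+3*p))" using pp by (simp add: powr_def)
    also have "\<dots> \<le> exp (q/2 * (3*p))"
      using ln_le_minus_one[of "1+3*p"] pp q by (intro exp_mono mult_left_mono) auto
    also have "q/2*(3*p) = 1/4" using q by (simp add: p_def)
    finally show ?thesis by simp
  qed
  ultimately show ?thesis using exp_quarter by linarith
qed

lemma Pow_single: "Pow {a} = {{}, {a}}" by auto

lemma pnorm1: "pnorm p {0::nat} q h = ((1-p) * \<bar>h {}\<bar> powr q + p * \<bar>h {0}\<bar> powr q) powr (1/q)"
  by (simp add: pnorm_def pmu_def Pow_single)

lemma pnorm0: "pnorm p {} 2 h = \<bar>h {}\<bar>"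
  by (simp add: pnorm_def pmu_def powr_powr)

definition ff :: "nat set \<Rightarrow> real" where "ff y = (if 0 \<in> y then 2 else 1)"

lemma T0: "noise_op p {0} \<rho> ff {} = (\<rho> + (1-\<rho>)*(1-p)) + 2*((1-\<rho>)*p)"
  by (simp add: noise_op_def noise_kernel_def Pow_single ff_def)
lemma T1: "noise_op p {0} \<rho> ff {0} = (1-\<rho>)*(1-p) + 2*(\<rho> + (1-\<rho>)*p)"
  by (simp add: noise_op_def noise_kernel_def Pow_single ff_def)

lemma norm2: "0 < (p::real) \<Longrightarrow> pnorm p {0} 2 ff = (1 + 3*p) powr (1/2)"
  by (simp add: pnorm1 ff_def algebra_simps)

theorem mainTheorem2:
  shows "\<exists>r C :: real. r > 1 \<and> C > 1 \<and>
    (\<forall>q :: real. q \<ge> 2 \<longrightarrow>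
      (\<exists>(n :: nat) (p :: real) (f :: nat set \<Rightarrow> real).
         0 < p \<and> p < 1 \<and>
         (\<forall>S x. S \<subseteq> {..<n} \<longrightarrow> x \<subseteq> S \<longrightarrow>
            pnorm p ({..<n} - S) 2 (restr f x) \<le> r ^ card S * pnorm p {..<n} 2 f) \<and>
         (\<forall>\<rho> :: real. C * ln q / (r * q) < \<rho> \<and> \<rho> \<le> 1 \<longrightarrow>
            pnorm p {..<n} q (noise_op p {..<n} \<rho> f) > pnorm p {..<n} 2 f)))"
proof (rule exI[of _ "2::real"], rule exI[of _ "12::real"], intro conjI allI impI)
  fix q :: real assume q: "2 \<le> q"
  define p where "p = 1/(6*q)"
  have pp: "0 < p" "p < 1" using q by (auto simp: p_def field_simps)
  have U: "{..<1::nat} = {0}" by auto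
  have N2: "pnorm p {0} 2 ff = (1 + 3*p) powr (1/2)" using norm2 pp by simp
  have N2ge: "1 \<le> pnorm p {0} 2 ff" unfolding N2 using pp by (intro ge_one_powr_ge_zero) auto
  show "\<exists>(n :: nat) (p :: real) (f :: nat set \<Rightarrow> real).
         0 < p \<and> p < 1 \<and>
         (\<forall>S x. S \<subseteq> {..<n} \<longrightarrow> x \<subseteq> S \<longrightarrow>
            pnorm p ({..<n} - S) 2 (restr f x) \<le> 2 ^ card S * pnorm p {..<n} 2 f) \<and>
         (\<forall>\<rho> :: real. 12 * ln q / (2 * q) < \<rho> \<and> \<rho> \<le> 1 \<longrightarrow>
            pnorm p {..<n} q (noise_op p {..<n} \<rho> f) > pnorm p {..<n} 2 f)"
  proof (rule exI[of _ "1::nat"], rule exI[of _ p], rule exI[of _ ff], intro conjI allI impI pp, unfold U)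
    fix S x :: "nat set" assume S: "S \<subseteq> {0}" and x: "x \<subseteq> S"
    show "pnorm p ({0} - S) 2 (restr ff x) \<le> 2 ^ card S * pnorm p {0} 2 ff"
    proof (cases "S = {}")
      case True
      then have "x = {}" using x by auto
      then have "restr ff x = ff" by (auto simp: restr_def)
      then show ?thesis using True by simp
    next
      case False
      then have "S = {0}" using S by auto
      moreover have "\<bar>restr ff x {}\<bar> \<le> 2" by (simp add: restr_def ff_def)
      ultimately show ?thesis using N2ge by (simp add: pnorm0)
    qed
  next
    fix \<rho> :: real assume r: "12 * ln q / (2 * q) < \<rho> \<and> \<rho> \<le> 1"
    have r1: "6 * ln q / q < \<rho>" using r by simp
    have lnq: "ln q \<ge> 0" using q by simp
    have rpos: "\<rho> > 0" using r1 q lnq by (smt (verit) divide_nonneg_pos)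
    have rp: "0 \<le> (1-\<rho>)*p" using pp r by simp
    have A: "1 \<le> noise_op p {0} \<rho> ff {}" unfolding T0 using rp
      by (simp add: algebra_simps)
    have B: "1 + \<rho> \<le> noise_op p {0} \<rho> ff {0}" unfolding T1 using rp r
      by (simp add: algebra_simps)
    have "(1-p) * 1 \<le> (1-p) * \<bar>noise_op p {0} \<rho> ff {}\<bar> powr q"
      using A pp q by (intro mult_left_mono ge_one_powr_ge_zero) auto
    moreover have "p * (1+\<rho>) powr q \<le> p * \<bar>noise_op p {0} \<rho> ff {0}\<bar> powr q"
      using B pp q rpos by (intro mult_left_mono powr_mono2) auto
    moreover have "(1+3*p) powr (q/2) < (1-p) + p*(1+\<rho>) powr q"
      using key[OF q r1] r unfolding p_def by simp
    ultimately have L: "(1+3*p) powr (q/2) < (1-p) * \<bar>noise_op p {0} \<rho> ff {}\<bar> powr q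
        + p * \<bar>noise_op p {0} \<rho> ff {0}\<bar> powr q"
      by (smt (verit))
    have "((1+3*p) powr (q/2)) powr (1/q) < ((1-p) * \<bar>noise_op p {0} \<rho> ff {}\<bar> powr q
        + p * \<bar>noise_op p {0} \<rho> ff {0}\<bar> powr q) powr (1/q)"
      using L q by (intro powr_less_mono2) auto
    moreover have "((1+3*p) powr (q/2)) powr (1/q) = (1+3*p) powr (1/2)"
      using q by (simp add: powr_powr)
    ultimately show "pnorm p {0} 2 ff < pnorm p {0} q (noise_op p {0} \<rho> ff)"
      unfolding N2 by (subst pnorm1) simp
  qed
qed simp_all

end
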